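(* Let $p$ be any prime, let $m,k$ be positive integers, let $q=p^m$, and let $U_{q+1}=\{x\in\mathbb{F}_{q^2}: x^{q+1}=1\}$. Then for any $a,b\in\mathbb{F}_{q^2}$ with $(a,b)\neq(0,0)$, the number of solutions $x\in U_{q+1}$ of the equation \[ b x^{p^k+1}+a x^{p^k}+a^{q}x+b^{q}=0 \] is one of $0$, $1$, $2$, or $p^{\gcd(k,m)}+1$. *)

theory Defs
  imports "HOL-Computational_Algebra.Primes" "HOL-Library.Cardinality"
begin

definition unit_circle :: "nat \<Rightarrow> 'a::field set" where
  "unit_circle q = {x. x ^ (q + 1) = 1}"

end

theory Submission
  imports Defs "HOL-Algebra.Multiplicative_Group" "HOL-Algebra.Algebraic_Closure_Type"
begin

hide_const (open) Divisibility.prime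

lemma frob_add:
  fixes x y :: "'a::field"
  assumes "CHAR('a) = p" "prime p"
  shows "(x + y) ^ (p ^ n) = x ^ (p ^ n) + y ^ (p ^ n)"
  using assms by (intro freshmans_dream') auto

lemma frob_diff:
  fixes x y :: "'a::field"
  assumes "CHAR('a) = p" "prime p"
  shows "(x - y) ^ (p ^ n) = x ^ (p ^ n) - y ^ (p ^ n)"
proof -
  have "x ^ (p ^ n) = ((x - y) + y) ^ (p ^ n)" by simp
  also have "\<dots> = (x - y) ^ (p ^ n) + y ^ (p ^ n)" using frob_add[OF assms] by blast
  finally show ?thesis by (simp add: algebra_simps)
qed

lemma frob_inj:
  fixes x y :: "'a::field"
  assumes "CHAR('a) = p" "prime p" "x ^ (p ^ n) = y ^ (p ^ n)"
  shows "x = y"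
proof -
  have "(x - y) ^ (p ^ n) = 0" using frob_diff[OF assms(1,2)] assms(3) by simp
  thus ?thesis by simp
qed

lemma key_ident:
  fixes b a c d w r1 r2 Xz R1 R2 :: "'a::field"
  assumes "b*(R1*r1) + a*R1 + c*r1 + d = 0" "b*(R2*r2) + a*R2 + c*r2 + d = 0"
  shows "(b*(Xz*w) + a*Xz + c*w + d) * ((R1 - R2)*(r1 - r2)) =
     (-(b*r1*R2 + a*R2 + c*r1 + d))*(Xz - R1)*(w - r2) + (-(b*R1*r2 + a*R1 + c*r2 + d))*(w - r1)*(Xz - R2)"
  using assms by Groebner_Basis.algebra

lemma nondeg:
  fixes b a c d r1 r2 R1 R2 :: "'a::field"
  assumes "b*(R1*r1) + a*R1 + c*r1 + d = 0" "b*(R2*r2) + a*R2 + c*r2 + d = 0"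
    "b*r1*R2 + a*R2 + c*r1 + d = 0" "b*R1*r2 + a*R1 + c*r2 + d = 0"
    "R1 \<noteq> R2" "r1 \<noteq> r2"
  shows "b = 0 \<and> a = 0 \<and> c = 0 \<and> d = 0"
proof -
  have "(R1 - R2) * (b*r1 + a) = 0" using assms(1,3) by Groebner_Basis.algebra
  hence 1: "b*r1 + a = 0" using assms(5) by simp
  have "(R1 - R2) * (b*r2 + a) = 0" using assms(2,4) by Groebner_Basis.algebra
  hence 2: "b*r2 + a = 0" using assms(5) by simp
  have "b * (r1 - r2) = 0" using 1 2 by Groebner_Basis.algebra
  hence b: "b = 0" using assms(6) by simp
  with 1 have a: "a = 0" by simp
  have "c * (r1 - r2) = 0" using assms(1,2) a b by Groebner_Basis.algebra
  hence "c = 0" using assms(6) by simp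
  with assms(1) a b show ?thesis by simp
qed

lemma keyA:
  fixes b a c d r1 r2 r3 z :: "'a::field"
  assumes ch: "CHAR('a) = p" "prime p"
    and Fd: "\<And>w. F w = b*w^(p^k+1) + a*w^(p^k) + c*w + d"
    and F1: "F r1 = 0" and F2: "F r2 = 0" and F3: "F r3 = 0"
    and d12: "r1 \<noteq> r2" and d13: "r1 \<noteq> r3" and d23: "r2 \<noteq> r3"
    and nz: "\<not> (b = 0 \<and> a = 0 \<and> c = 0 \<and> d = 0)"
    and z: "z \<noteq> r2"
  shows "F z = 0 \<longleftrightarrow> (((z-r1)*(r3-r2))/((z-r2)*(r3-r1))) ^ (p^k) = ((z-r1)*(r3-r2))/((z-r2)*(r3-r1))"
proof -
  define Q where "Q = p^k"
  have Fd': "F w = b*(w^Q*w) + a*w^Q + c*w + d" for w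
    using Fd[of w] by (simp add: Q_def)
  define A where "A = -(b*r1*r2^Q + a*r2^Q + c*r1 + d)"
  define C where "C = -(b*r1^Q*r2 + a*r1^Q + c*r2 + d)"
  have fd: "(x - y)^Q = x^Q - y^Q" for x y :: 'a using frob_diff[OF ch] Q_def by simp
  have fi: "x^Q = y^Q \<Longrightarrow> x = y" for x y :: 'a using frob_inj[OF ch] Q_def by blast
  have R12: "r1^Q \<noteq> r2^Q" using fi d12 by blast
  have id: "F w * ((r1^Q - r2^Q)*(r1 - r2)) = A*(w - r1)^Q*(w - r2) + C*(w - r1)*(w - r2)^Q" for w
    unfolding fd A_def C_def Fd'
    by (rule key_ident) (use F1 F2 Fd' in auto)
  have nzc: "(r1^Q - r2^Q)*(r1 - r2) \<noteq> 0" using R12 d12 by simp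
  have A0: "A \<noteq> 0"
  proof
    assume A: "A = 0"
    have "C*(r3 - r1)*(r3 - r2)^Q = 0" using id[of r3] F3 A by simp
    hence C: "C = 0" using d13 d23 by simp
    have e1: "b*(r1^Q*r1) + a*r1^Q + c*r1 + d = 0" using F1 Fd' by simp
    have e2: "b*(r2^Q*r2) + a*r2^Q + c*r2 + d = 0" using F2 Fd' by simp
    have e3: "b*r1*r2^Q + a*r2^Q + c*r1 + d = 0" using A unfolding A_def by (simp only: neg_equal_0_iff_equal)
    have e4: "b*r1^Q*r2 + a*r1^Q + c*r2 + d = 0" using C unfolding C_def by (simp only: neg_equal_0_iff_equal)
    have "b = 0 \<and> a = 0 \<and> c = 0 \<and> d = 0"
      by (rule nondeg[OF e1 e2 e3 e4 R12 d12])
    with nz show False by blast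
  qed
  define u where "u = z - r1"
  define w where "w = z - r2"
  define u3 where "u3 = r3 - r1"
  define w3 where "w3 = r3 - r2"
  have nz3: "u3 \<noteq> 0" "w3 \<noteq> 0" "w \<noteq> 0" using d13 d23 z by (auto simp: u3_def w3_def w_def)
  have e3: "A*u3^Q*w3 + C*u3*w3^Q = 0" using id[of r3] F3 by (simp add: u3_def w3_def)
  have Ce: "C*(u3*w3^Q) = -(A*u3^Q*w3)" using e3 by (simp add: algebra_simps add_eq_0_iff2)
  have m: "u3*w3^Q \<noteq> 0" using nz3 by simp
  have "F z = 0 \<longleftrightarrow> A*u^Q*w + C*u*w^Q = 0" using id[of z] nzc by (auto simp: u_def w_def)
  also have "\<dots> \<longleftrightarrow> (A*u^Q*w + C*u*w^Q) * (u3*w3^Q) = 0" using m mult_eq_0_iff by blast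
  also have "(A*u^Q*w + C*u*w^Q) * (u3*w3^Q) = A*u^Q*w*(u3*w3^Q) + (C*(u3*w3^Q))*u*w^Q"
    by (simp add: algebra_simps)
  also have "\<dots> = A*(u^Q*w*(u3*w3^Q) - u3^Q*w3*u*w^Q)" unfolding Ce by (simp add: algebra_simps)
  also have "\<dots> = 0 \<longleftrightarrow> u^Q*w*(u3*w3^Q) = u3^Q*w3*u*w^Q" using A0 by simp
  also have "\<dots> \<longleftrightarrow> ((u*w3)/(w*u3))^Q = (u*w3)/(w*u3)"
  proof -
    have D: "(w*u3)^Q \<noteq> 0" "w*u3 \<noteq> 0" using nz3 by auto
    have "((u*w3)/(w*u3))^Q = (u*w3)^Q/(w*u3)^Q" by (rule power_divide)
    hence "(((u*w3)/(w*u3))^Q = (u*w3)/(w*u3)) \<longleftrightarrow> (u*w3)^Q * (w*u3) = (u*w3) * (w*u3)^Q"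
      using frac_eq_eq[OF D] by simp
    also have "(u*w3)^Q * (w*u3) = u^Q*w*(u3*w3^Q)" by (simp add: power_mult_distrib mult_ac)
    also have "(u*w3) * (w*u3)^Q = u3^Q*w3*u*w^Q" by (simp add: power_mult_distrib mult_ac)
    finally show ?thesis by simp
  qed
  finally show ?thesis by (simp add: u_def w_def u3_def w3_def Q_def)
qed

lemma add_card:
  fixes x :: "'a::{field,finite}"
  shows "of_nat CARD('a) * x = 0"
proof -
  have "(\<Sum>y\<in>UNIV. x + y) = (\<Sum>y\<in>(UNIV::'a set). y)"
    by (rule sum.reindex_bij_witness[of _ "\<lambda>y. y - x" "\<lambda>y. x + y"]) auto
  moreover have "(\<Sum>y\<in>UNIV. x + y) = of_nat CARD('a) * x + (\<Sum>y\<in>(UNIV::'a set). y)"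
    by (simp add: sum.distrib)
  ultimately show ?thesis by simp
qed

lemma char_eq:
  assumes "CARD('a::{field,finite}) = p ^ n" "prime p" "n > 0"
  shows "CHAR('a) = p"
proof -
  have "of_nat (p ^ n) = (0::'a)" using add_card[where x="1::'a"] assms(1) by simp
  hence d: "CHAR('a) dvd p ^ n" using of_nat_eq_0_iff_char_dvd by blast
  have "CHAR('a) > 0" by (rule finite_imp_CHAR_pos) simp
  hence pr: "prime CHAR('a)" using prime_CHAR_semidom by blast
  hence "CHAR('a) dvd p" using d prime_dvd_power by blast
  thus ?thesis using pr assms(2) primes_dvd_imp_eq by blast
qed

lemma pow_card:
  fixes x :: "'a :: {field,finite}"
  shows   "x ^ CARD('a) = x"
proof (cases "x = 0")
  case False
  have "x * (\<Prod>y\<in>UNIV-{0}. x * y) = x * x ^ (card (UNIV :: 'a set) - 1) * \<Prod>(UNIV-{0})"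
    by (simp add: prod.distrib mult_ac)
  also have "x * x ^ (card (UNIV :: 'a set) - 1) = x ^ Suc (card (UNIV :: 'a set) - 1)"
    by (subst power_Suc) auto
  also have "Suc (card (UNIV :: 'a set) - 1) = card (UNIV :: 'a set)"
    using finite_UNIV_card_ge_0[where ?'a = 'a] by simp
  also have "(\<Prod>y\<in>UNIV-{0}. x * y) = (\<Prod>y\<in>UNIV-{0}. y)"
    by (rule prod.reindex_bij_witness[of _ "\<lambda>y. y / x" "\<lambda>y. x * y"]) (use False in auto)
  finally show ?thesis
    by simp
qed (use finite_UNIV_card_ge_0[where ?'a = 'a] in auto)

lemma funpow_gcd_fix:
  "(f ^^ a) t = t \<Longrightarrow> (f ^^ b) t = t \<Longrightarrow> (f ^^ gcd a b) t = t"
proof (induction "a + b" arbitrary: a b rule: less_induct)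
  case less
  show ?case
  proof (cases "a = 0 \<or> b = 0")
    case True thus ?thesis using less.prems by auto
  next
    case False
    show ?thesis
    proof (cases "a \<le> b")
      case True
      have "(f ^^ b) t = (f ^^ (b - a)) ((f ^^ a) t)"
        using True by (metis funpow_add le_add_diff_inverse2 comp_apply)
      hence "(f ^^ (b - a)) t = t" using less.prems by simp
      hence "(f ^^ gcd a (b - a)) t = t" using less.hyps[of a "b-a"] less.prems False True by auto
      moreover have "gcd a (b - a) = gcd a b" using True by (metis gcd.commute gcd_diff1_nat)
      ultimately show ?thesis by simp
    next
      case nle: False
      have "(f ^^ a) t = (f ^^ (a - b)) ((f ^^ b) t)"
        using nle by (metis funpow_add le_add_diff_inverse2 comp_apply nat_le_linear)
      hence "(f ^^ (a - b)) t = t" using less.prems by simp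
      hence "(f ^^ gcd (a - b) b) t = t" using less.hyps[of "a-b" b] less.prems False nle by auto
      moreover have "gcd (a - b) b = gcd a b" using nle by (simp add: gcd_diff1_nat)
      ultimately show ?thesis by simp
    qed
  qed
qed

lemma funpow_mult_fix:
  "(f ^^ a) t = t \<Longrightarrow> (f ^^ (a * r)) t = t"
  by (induction r) (auto simp: funpow_add)

lemma funpow_pow: "((\<lambda>x::'a::monoid_mult. x ^ p) ^^ n) t = t ^ (p ^ n)"
  by (induction n) (auto simp: power_mult[symmetric] mult.commute)

lemma pow_transfer:
  "x [^]\<^bsub>(ring_of_type_algebra :: 'a::field ring)\<^esub> (i::nat) = x ^ i"
  by (induction i) (simp_all add: ring_of_type_algebra_def)

lemma gen_exists: "\<exists>g::'a::{field,finite}. g \<noteq> 0 \<and> (\<forall>x. x \<noteq> 0 \<longrightarrow> (\<exists>i. x = g ^ i))"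
proof -
  interpret F: field "ring_of_type_algebra :: 'a ring" by (rule field_from_type_algebra)
  have fin: "finite (carrier (ring_of_type_algebra :: 'a ring))" by (simp add: ring_of_type_algebra_def)
  from F.finite_field_mult_group_has_gen[OF fin] obtain g where
    g0: "g \<in> carrier (Multiplicative_Group.mult_of (ring_of_type_algebra :: 'a ring))" and g: "carrier (Multiplicative_Group.mult_of (ring_of_type_algebra :: 'a ring)) =
         {g [^]\<^bsub>(ring_of_type_algebra :: 'a ring)\<^esub> i | i::nat. i \<in> UNIV}" by blast
  have "\<forall>x::'a. x \<noteq> 0 \<longrightarrow> (\<exists>i. x = g ^ i)"
  proof (intro allI impI)
    fix x :: 'a assume "x \<noteq> 0"
    hence "x \<in> carrier (Multiplicative_Group.mult_of (ring_of_type_algebra :: 'a ring))"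
      by (simp add: ring_of_type_algebra_def)
    then show "\<exists>i. x = g ^ i" unfolding g pow_transfer by blast
  qed
  moreover have "g \<noteq> 0" using g0 by (simp add: ring_of_type_algebra_def)
  ultimately show ?thesis by blast
qed

lemma nat_pm1_dvd: "(P::nat) \<ge> 1 \<Longrightarrow> (P - 1) dvd (P ^ r - 1)"
proof (induction r)
  case 0 thus ?case by simp
next
  case (Suc r)
  have h: "P ^ Suc r - 1 = P * (P ^ r - 1) + (P - 1)"
    using Suc.prems by (simp add: algebra_simps diff_mult_distrib2)
  have "(P - 1) dvd (P * (P ^ r - 1) + (P - 1))" using Suc by (intro dvd_add dvd_mult) auto
  thus ?case by (subst h)
qed

lemma card_fix_upper:
  assumes "(P::nat) \<ge> 2"
  shows "card {t::'a::field. t ^ P = t} \<le> P"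
proof -
  define pp :: "'a poly" where "pp = monom 1 P + [:0, -1:]"
  have deg: "degree pp = P" unfolding pp_def using assms
    by (subst degree_add_eq_left) (auto simp: degree_monom_eq)
  have "pp \<noteq> 0" using deg assms by auto
  moreover have "{t. t ^ P = t} = {x. poly pp x = 0}" by (auto simp: pp_def poly_monom)
  ultimately show ?thesis using card_poly_roots_bound[of pp] deg by simp
qed

lemma card_fix:
  assumes card: "CARD('a::{field,finite}) = P ^ r" and P: "P \<ge> 2" and r: "r > 0"
  shows "card {t::'a. t ^ P = t} = P"
proof (rule antisym)
  show "card {t::'a. t ^ P = t} \<le> P" by (rule card_fix_upper[OF P])
  obtain g :: 'a where g0: "g \<noteq> 0" and g: "\<And>x. x \<noteq> 0 \<Longrightarrow> \<exists>i. x = g ^ i" using gen_exists by blast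
  define N where "N = P ^ r - 1"
  have Pr: "P ^ r \<ge> P" using P r by (intro self_le_power) auto
  have cN: "card (UNIV - {0::'a}) = N" using card by (simp add: N_def card_Diff_subset)
  have N1: "N \<ge> P - 1" using Pr N_def by simp
  have gN: "g ^ N = 1"
  proof -
    have "g ^ Suc N = g" using pow_card[of g] card N_def Pr P by simp
    thus ?thesis using g0 by simp
  qed
  have ord: "j \<ge> N" if "g ^ j = 1" "j > 0" for j
  proof -
    have "UNIV - {0::'a} \<subseteq> (\<lambda>i. g ^ i) ` {..<j}"
    proof
      fix x :: 'a assume "x \<in> UNIV - {0}"
      then obtain i where "x = g ^ i" using g by blast
      also have "g ^ i = g ^ (i mod j + j * (i div j))" by simp
      also have "\<dots> = g ^ (i mod j) * (g ^ j) ^ (i div j)"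
        by (simp only: power_add power_mult)
      finally have "x = g ^ (i mod j)" using that by simp
      thus "x \<in> (\<lambda>i. g ^ i) ` {..<j}" using that by auto
    qed
    hence "card (UNIV - {0::'a}) \<le> card ((\<lambda>i. g ^ i) ` {..<j})" by (intro card_mono) auto
    also have "\<dots> \<le> j" using card_image_le[of "{..<j}"] by simp
    finally show ?thesis using cN by simp
  qed
  define d where "d = P - 1"
  have dN: "d dvd N" unfolding d_def N_def by (rule nat_pm1_dvd) (use P in simp)
  define e where "e = N div d"
  have Nde: "N = d * e" using dN by (simp add: e_def)
  have d0: "d > 0" using P d_def by simp
  have e0: "e > 0"
  proof (rule ccontr)
    assume "\<not> e > 0"
    hence "N = 0" using Nde by simp
    thus False using N1 P by simp
  qed
  define f where "f i = g ^ (i * e)" for i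
  have inj: "inj_on f {..<d}"
  proof (rule inj_onI)
    fix i i' assume ii: "i \<in> {..<d}" "i' \<in> {..<d}" "f i = f i'"
    show "i = i'"
    proof (rule ccontr)
      assume ne: "i \<noteq> i'"
      have key: "False" if lt: "a < b" "b < d" "f a = f b" for a b
      proof -
        have "b * e = a * e + (b - a) * e" using lt by (simp add: diff_mult_distrib)
        hence "g ^ (b * e) = g ^ (a * e) * g ^ ((b - a) * e)"
          by (simp only: power_add)
        hence "g ^ ((b - a) * e) = 1" using lt(3) g0 by (simp add: f_def)
        hence "(b - a) * e \<ge> N" using ord lt e0 by simp
        moreover have "(b - a) * e < d * e" using lt e0 by simp
        ultimately show False using Nde by simp
      qed
      show False
      proof (cases "i < i'")
        case True thus False using ii key[of i i'] by auto
      next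
        case False hence "i' < i" using ne by simp
        thus False using ii key[of i' i] by auto
      qed
    qed
  qed
  have fT: "f i ^ P = f i" for i
  proof -
    have "f i ^ d = g ^ (N * i)" unfolding f_def Nde by (simp add: power_mult[symmetric] mult_ac)
    also have "\<dots> = 1" by (simp add: power_mult gN)
    finally have "f i ^ d = 1" .
    moreover have "P = Suc d" using P d_def by simp
    ultimately show ?thesis by simp
  qed
  have f0: "f i \<noteq> 0" for i using g0 by (simp add: f_def)
  have "insert 0 (f ` {..<d}) \<subseteq> {t::'a. t ^ P = t}" using fT P by auto
  hence "card (insert 0 (f ` {..<d})) \<le> card {t::'a. t ^ P = t}" by (intro card_mono) auto
  moreover have "card (insert 0 (f ` {..<d})) = Suc d"
    using f0 inj by (subst card_insert_disjoint) (auto simp: card_image)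
  ultimately show "P \<le> card {t::'a. t ^ P = t}" using d_def P by simp
qed

lemma conj_cr:
  fixes z r1 r2 r3 :: "'a::field"
  assumes "z \<noteq> 0" "r1 \<noteq> 0" "r2 \<noteq> 0" "r3 \<noteq> 0" "z \<noteq> r2" "r3 \<noteq> r1" "r3 \<noteq> r2"
  shows "((inverse z - inverse r1)*(inverse r3 - inverse r2))/((inverse z - inverse r2)*(inverse r3 - inverse r1))
     = ((z-r1)*(r3-r2))/((z-r2)*(r3-r1))"
proof -
  have i: "inverse x - inverse y = (y - x)/(x*y)" if "x \<noteq> 0" "y \<noteq> 0" for x y :: 'a
    using that by (simp add: field_simps)
  have nz: "z - r2 \<noteq> 0" "r3 - r1 \<noteq> 0" "r3 - r2 \<noteq> 0" using assms by auto
  define D where "D = z*r1*r3*r2"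
  have D0: "D \<noteq> 0" using assms by (simp add: D_def)
  have a: "((r1 - z)/(z*r1)) * ((r2 - r3)/(r3*r2)) = ((z-r1)*(r3-r2))/D"
    by (simp add: D_def mult_ac algebra_simps)
  have b: "((r2 - z)/(z*r2)) * ((r1 - r3)/(r3*r1)) = ((z-r2)*(r3-r1))/D"
    by (simp add: D_def mult_ac algebra_simps)
  have c: "(x/D)/(y/D) = x/y" for x y using D0 by (simp add: divide_divide_eq_left divide_divide_eq_right mult.commute)
  show ?thesis unfolding i[OF assms(1,2)] i[OF assms(4,3)] i[OF assms(1,3)] i[OF assms(4,2)] a b c ..
qed

lemma kappa_conj:
  fixes r1 r2 r3 :: "'a::field"
  assumes "r1 \<noteq> 0" "r2 \<noteq> 0" "r3 \<noteq> 0" "r3 \<noteq> r1" "r3 \<noteq> r2"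
  shows "(inverse r3 - inverse r2)/(inverse r3 - inverse r1) = ((r3-r2)/(r3-r1)) * (r1/r2)"
proof -
  have nz: "r3 - r1 \<noteq> 0" "r3 - r2 \<noteq> 0" "r1 - r3 \<noteq> 0" using assms by auto
  show ?thesis using assms nz by (simp add: field_simps)
qed

lemma pre_conj:
  fixes r1 r2 s :: "'a::field"
  assumes "r1 \<noteq> 0" "r2 \<noteq> 0" "s \<noteq> 1" "r1 - s*r2 \<noteq> 0" "r1 - s * r2 \<noteq> 0"
  shows "(inverse r1 - (s*r2/r1) * inverse r2)/(1 - s*r2/r1) = inverse ((r1 - s*r2)/(1 - s))"
proof -
  have nz: "1 - s \<noteq> 0" "r1 - s*r2 \<noteq> 0" using assms by auto
  have "1 - s*r2/r1 = (r1 - s*r2)/r1" using assms by (simp add: field_simps)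
  moreover have "inverse r1 - (s*r2/r1) * inverse r2 = (1 - s)/r1" using assms by (simp add: field_simps)
  ultimately show ?thesis using assms nz by (simp add: field_simps)
qed

lemma pre_val:
  fixes r1 r2 r3 s :: "'a::field"
  assumes "r1 \<noteq> r2" "s \<noteq> 1" "r3 \<noteq> r1" "r3 \<noteq> r2"
  shows "(((r1 - s*r2)/(1 - s) - r1)*(r3-r2))/(((r1 - s*r2)/(1 - s) - r2)*(r3-r1)) = s * ((r3-r2)/(r3-r1))"
proof -
  have nz: "1 - s \<noteq> 0" "r1 - r2 \<noteq> 0" "r3 - r1 \<noteq> 0" "r3 - r2 \<noteq> 0" using assms by auto
  have e1: "(r1 - s*r2)/(1 - s) - r1 = s*(r1 - r2)/(1 - s)" using nz by (simp add: field_simps)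
  have e2: "(r1 - s*r2)/(1 - s) - r2 = (r1 - r2)/(1 - s)" using nz by (simp add: field_simps)
  define W where "W = (r1 - r2)/(1 - s)"
  have W0: "W \<noteq> 0" using nz by (simp add: W_def)
  have "(s*(r1 - r2)/(1 - s)*(r3-r2)) = (s*(r3-r2)) * W" by (simp add: W_def)
  moreover have "(r1 - r2)/(1 - s)*(r3-r1) = (r3-r1) * W" by (simp add: W_def)
  ultimately show ?thesis unfolding e1 e2 using W0 by simp
qed

theorem lemma2p5:
  fixes p m k :: nat and a b :: "'a::{field,finite}"
  assumes "prime p" and "m > 0" and "k > 0"
    and "CARD('a) = (p ^ m) ^ 2"
    and "(a, b) \<noteq> (0, 0)"
  shows "card {x \<in> unit_circle (p ^ m).
            b * x ^ (p ^ k + 1) + a * x ^ (p ^ k) + a ^ (p ^ m) * x + b ^ (p ^ m) = 0}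
         \<in> {0, 1, 2, p ^ gcd k m + 1}"
proof -
  note pr = assms(1)
  define q where "q = p ^ m"
  define Q where "Q = p ^ k"
  define g where "g = gcd k m"
  define P where "P = p ^ g"
  have cardp: "CARD('a) = p ^ (2*m)" using assms(4) by (simp add: power_mult mult.commute)
  have ch: "CHAR('a) = p" using char_eq[OF cardp pr] assms(2) by simp
  have p2: "p \<ge> 2" using pr prime_ge_2_nat by blast
  define F where "F w = b * w ^ (p ^ k + 1) + a * w ^ (p ^ k) + a ^ (p ^ m) * w + b ^ (p ^ m)" for w :: 'a
  define S where "S = {x \<in> unit_circle (p ^ m). F x = 0}"
  have Seq: "{x \<in> unit_circle (p ^ m).
            b * x ^ (p ^ k + 1) + a * x ^ (p ^ k) + a ^ (p ^ m) * x + b ^ (p ^ m) = 0} = S"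
    by (simp add: S_def F_def)
  have finS: "finite S" by simp
  have Uq: "x \<noteq> 0 \<and> x ^ q = inverse x" if "x \<in> unit_circle (p ^ m)" for x :: 'a
  proof -
    have "x ^ q * x = 1" using that by (simp add: unit_circle_def q_def mult.commute)
    thus ?thesis by (metis inverse_unique mult.commute mult_zero_left zero_neq_one)
  qed
  have fdq: "(x - y) ^ q = x ^ q - y ^ q" for x y :: 'a using frob_diff[OF ch pr] by (simp add: q_def)
  have fiq: "x ^ q = y ^ q \<Longrightarrow> x = y" for x y :: 'a using frob_inj[OF ch pr] by (simp add: q_def)
  define T where "T = {t::'a. t ^ P = t}"
  have g0: "g > 0" using assms(3) by (simp add: g_def)
  have gm: "g dvd m" "g dvd k" by (simp_all add: g_def)
  have Teq: "t \<in> T \<longleftrightarrow> t ^ q = t \<and> t ^ Q = t" for t :: 'a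
  proof
    assume "t \<in> T"
    hence fx: "((\<lambda>x::'a. x ^ p) ^^ g) t = t" by (simp add: T_def P_def funpow_pow)
    obtain r where "m = g * r" using gm by (auto simp: dvd_def)
    hence "((\<lambda>x::'a. x ^ p) ^^ m) t = t" using funpow_mult_fix[OF fx] by simp
    moreover obtain r' where "k = g * r'" using gm by (auto simp: dvd_def)
    hence "((\<lambda>x::'a. x ^ p) ^^ k) t = t" using funpow_mult_fix[OF fx] by simp
    ultimately show "t ^ q = t \<and> t ^ Q = t" by (simp add: q_def Q_def funpow_pow)
  next
    assume "t ^ q = t \<and> t ^ Q = t"
    hence "((\<lambda>x::'a. x ^ p) ^^ k) t = t" "((\<lambda>x::'a. x ^ p) ^^ m) t = t"
      by (simp_all add: q_def Q_def funpow_pow)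
    from funpow_gcd_fix[OF this] show "t \<in> T" by (simp add: T_def P_def g_def funpow_pow)
  qed
  have cardT: "card T = P"
  proof -
    obtain r0 where "m = g * r0" using gm(1) unfolding dvd_def by blast
    hence r: "2 * m = g * (2 * r0)" by simp
    define r where "r = 2 * r0"
    note r = r[folded r_def]
    have "r > 0" using r assms(2) by (cases r) auto
    moreover have "CARD('a) = P ^ r" using cardp r by (simp add: P_def power_mult)
    moreover have "P \<ge> 2" using p2 g0 unfolding P_def
      by (metis Suc_leI le_trans self_le_power zero_less_numeral one_le_numeral le_add2 numeral_2_eq_2 p2 Suc_1 One_nat_def)
    ultimately show ?thesis unfolding T_def by (intro card_fix) auto
  qed
  show ?thesis
  proof (cases "card S < 3")
    case True
    hence "card S = 0 \<or> card S = 1 \<or> card S = 2" by linarith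
    thus ?thesis unfolding Seq by blast
  next
    case False
    obtain r1 where r1: "r1 \<in> S" using False by (metis card.empty ex_in_conv gr0I zero_less_numeral)
    have "card (S - {r1}) \<ge> 2" using False r1 finS by (simp add: card_Diff_singleton)
    then obtain r2 where r2: "r2 \<in> S - {r1}" by (metis card.empty ex_in_conv not_numeral_le_zero)
    have "card (S - {r1} - {r2}) \<ge> 1" using \<open>card (S - {r1}) \<ge> 2\<close> r2 finS by (simp add: card_Diff_singleton)
    then obtain r3 where r3: "r3 \<in> S - {r1} - {r2}" by (metis card.empty ex_in_conv not_one_le_zero)
    have rS: "r1 \<in> S" "r2 \<in> S" "r3 \<in> S" and d12: "r1 \<noteq> r2" and d13: "r1 \<noteq> r3" and d23: "r2 \<noteq> r3"
      using r1 r2 r3 by auto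
    have rU: "r \<noteq> 0 \<and> r ^ q = inverse r" if "r \<in> S" for r using that Uq by (simp add: S_def)
    have nz: "\<not> (b = 0 \<and> a = 0 \<and> a ^ (p^m) = 0 \<and> b ^ (p^m) = 0)" using assms(5) by auto
    define \<phi> where "\<phi> z = ((z-r1)*(r3-r2))/((z-r2)*(r3-r1))" for z :: 'a
    have key: "F z = 0 \<longleftrightarrow> \<phi> z ^ Q = \<phi> z" if "z \<noteq> r2" for z
      unfolding \<phi>_def Q_def
      by (rule keyA[OF ch pr _ _ _ _ d12 d13 d23 nz that, of F]) (use rS in \<open>auto simp: F_def S_def\<close>)
    have phiq: "\<phi> z ^ q = \<phi> z" if "z \<in> unit_circle (p ^ m)" "z \<noteq> r2" for z
    proof -
      have "\<phi> z ^ q = ((z^q-r1^q)*(r3^q-r2^q))/((z^q-r2^q)*(r3^q-r1^q))"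
        by (simp add: \<phi>_def power_divide power_mult_distrib fdq)
      also have "\<dots> = ((inverse z - inverse r1)*(inverse r3 - inverse r2))/((inverse z - inverse r2)*(inverse r3 - inverse r1))"
        using Uq[OF that(1)] rU rS by simp
      also have "\<dots> = \<phi> z" unfolding \<phi>_def
        by (rule conj_cr) (use Uq[OF that(1)] rU rS that d12 d13 d23 in auto)
      finally show ?thesis .
    qed
    have bij: "bij_betw \<phi> (S - {r2}) T"
    proof (rule bij_betw_imageI)
      show "inj_on \<phi> (S - {r2})"
      proof (rule inj_onI)
        fix z z' assume z: "z \<in> S - {r2}" and z': "z' \<in> S - {r2}" and e: "\<phi> z = \<phi> z'"
        have nz: "z - r2 \<noteq> 0" "z' - r2 \<noteq> 0" "r3 - r1 \<noteq> 0" "r3 - r2 \<noteq> 0" using z z' d13 d23 by auto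
        have "(z-r1)*(r3-r2)*((z'-r2)*(r3-r1)) = (z'-r1)*(r3-r2)*((z-r2)*(r3-r1))"
          using e nz unfolding \<phi>_def by (simp add: frac_eq_eq)
        hence "((z-r1)*(z'-r2) - (z'-r1)*(z-r2)) * ((r3-r2)*(r3-r1)) = 0"
          by (simp add: algebra_simps)
        hence "(z-r1)*(z'-r2) - (z'-r1)*(z-r2) = 0" using nz by simp
        hence "(z - z')*(r1 - r2) = 0" by (simp add: algebra_simps)
        thus "z = z'" using d12 by simp
      qed
    next
      show "\<phi> ` (S - {r2}) = T"
      proof
        show "\<phi> ` (S - {r2}) \<subseteq> T"
        proof
          fix t assume "t \<in> \<phi> ` (S - {r2})"
          then obtain z where z: "z \<in> S" "z \<noteq> r2" "t = \<phi> z" by auto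
          have "t ^ q = t" using phiq z by (simp add: S_def)
          moreover have "t ^ Q = t" using key z by (simp add: S_def)
          ultimately show "t \<in> T" using Teq by blast
        qed
      next
        show "T \<subseteq> \<phi> ` (S - {r2})"
        proof
          fix t assume "t \<in> T"
          hence tq: "t ^ q = t" and tQ: "t ^ Q = t" using Teq by auto
          define \<kappa> where "\<kappa> = (r3-r2)/(r3-r1)"
          have k0: "\<kappa> \<noteq> 0" using d13 d23 by (simp add: \<kappa>_def)
          have kq: "\<kappa> ^ q = \<kappa> * (r1/r2)"
          proof -
            have "\<kappa> ^ q = (r3^q - r2^q)/(r3^q - r1^q)" by (simp add: \<kappa>_def power_divide fdq)
            also have "\<dots> = (inverse r3 - inverse r2)/(inverse r3 - inverse r1)" using rU rS by simp
            also have "\<dots> = \<kappa> * (r1/r2)" unfolding \<kappa>_def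
              by (rule kappa_conj) (use rU rS d12 d13 d23 in auto)
            finally show ?thesis .
          qed
          define s where "s = t / \<kappa>"
          have r10: "r1 \<noteq> 0" "r2 \<noteq> 0" using rU rS by auto
          have sq: "s ^ q = s * r2 / r1"
            using kq tq r10 k0 by (simp add: s_def power_divide field_simps)
          have one_q: "(1::'a) ^ q = 1" by simp
          have s1: "s \<noteq> 1"
          proof
            assume "s = 1"
            hence "1 = r2 / r1" using sq by simp
            thus False using r10 d12 by (simp add: field_simps)
          qed
          have sq1: "s ^ q \<noteq> 1" using s1 fiq[of s 1] by auto
          have rs: "r1 - s * r2 \<noteq> 0"
          proof
            assume "r1 - s * r2 = 0"
            hence "s = r1 / r2" using r10 by (simp add: field_simps)
            hence "s ^ q = inverse r1 / inverse r2" using rU rS by (simp add: power_divide)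
            hence "s * r2 / r1 = r2 / r1" using sq r10 by (simp add: field_simps)
            hence "s = 1" using r10 by (simp add: field_simps)
            thus False using s1 by simp
          qed
          define z where "z = (r1 - s*r2)/(1 - s)"
          have z0: "z \<noteq> 0" using rs s1 by (simp add: z_def)
          have zq: "z ^ q = inverse z"
          proof -
            have "z ^ q = (r1^q - s^q * r2^q)/(1 - s^q)"
              by (simp add: z_def power_divide fdq power_mult_distrib)
            also have "\<dots> = (inverse r1 - (s*r2/r1) * inverse r2)/(1 - s*r2/r1)"
              using rU rS sq by simp
            also have "\<dots> = inverse z" unfolding z_def
              by (rule pre_conj) (use r10 s1 rs in auto)
            finally show ?thesis .
          qed
          have zU: "z \<in> unit_circle (p ^ m)"
            using zq z0 by (simp add: unit_circle_def q_def[symmetric] power_Suc2)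
          have zr2: "z \<noteq> r2"
          proof
            assume "z = r2"
            hence "r1 - s*r2 = r2 - s*r2" using s1 by (simp add: z_def field_simps)
            thus False using d12 by simp
          qed
          have pz: "\<phi> z = t"
          proof -
            have "\<phi> z = s * \<kappa>" unfolding \<phi>_def z_def \<kappa>_def
              by (rule pre_val) (use d12 s1 d13 d23 in auto)
            thus ?thesis using k0 by (simp add: s_def)
          qed
          have "F z = 0" using key[OF zr2] pz tQ by simp
          hence "z \<in> S - {r2}" using zU zr2 by (simp add: S_def)
          thus "t \<in> \<phi> ` (S - {r2})" using pz by blast
        qed
      qed
    qed
    have "card (S - {r2}) = P" using bij_betw_same_card[OF bij] cardT by simp
    hence "card S = P + 1" using rS finS by (metis card_Diff_singleton Suc_eq_plus1 card_Suc_Diff1)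
    thus ?thesis unfolding Seq P_def g_def by simp
  qed
qed

end
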